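(* Assume the three-space setting of the context. There exist $\epsilon_0>0$, $D'>0$ and $\lambda'>0$ such that for all $\epsilon\in I$ with $|\epsilon|\le\epsilon_0$, all $\omega\in\Omega'$ and all $n\in\mathbb N$: \[ \|\mathcal L^n_{\omega,\epsilon}h\|_{ss}\le D'e^{-\lambda' n}\|h\|_{ss}\ \ \text{for }h\in\mathcal B_{ss}^0,\qquad \|\mathcal L^n_{\omega,\epsilon}h\|_{s}\le D'e^{-\lambda' n}\|h\|_{s}\ \ \text{for }h\in\mathcal B_{s}^0. \]
   Context: $(\Omega,\mathcal F,\mathbb P)$ is a probability space, $\sigma$ an invertible measurable $\mathbb P$-preserving ergodic map. $\mathcal B_{ss}\subset\mathcal B_s\subset\mathcal B_w$ are Banach spaces with norms $\|\cdot\|_w\le\|\cdot\|_s$ on $\mathcal B_s$ and $\|\cdot\|_s\le\|\cdot\|_{ss}$ on $\mathcal B_{ss}$. $\psi$ is a nonzero bounded linear functional on $\mathcal B_s$ with a bounded extension to $\mathcal B_w$ (and restriction to $\mathcal B_{ss}$); $\mathcal B_{x}^0:=\{h\in\mathcal B_x:\psi(h)=0\}$ for $x\in\{ss,s,w\}$. $I\ni0$ is an interval; for $\epsilon\in I$, $\omega\in\Omega$, $\mathcal L_{\omega,\epsilon}$ is a bounded operator on each of the three spaces, and $\omega\mapsto\mathcal L_{\omega,\epsilon}h$ is measurable for each $h\in\mathcal B_s$ (resp. $h\in\mathcal B_{ss}$) and each $\epsilon$. $\mathcal L_\omega:=\mathcal L_{\omega,0}$, $\mathcal L^n_{\omega,\epsilon}:=\mathcal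 L_{\sigma^{n-1}\omega,\epsilon}\circ\cdots\circ\mathcal L_{\omega,\epsilon}$. There are $C,D,\lambda>0$, $\lambda_1\in(0,1)$ and a measurable $\sigma$-invariant $\Omega'\subset\Omega$, $\mathbb P(\Omega')=1$, such that for all $\epsilon\in I$, $\omega\in\Omega'$, $n\in\mathbb N$: $\|\mathcal L^n_\omega h\|_s\le De^{-\lambda n}\|h\|_s$ ($h\in\mathcal B_s^0$); $\|\mathcal L^n_\omega h\|_{ss}\le De^{-\lambda n}\|h\|_{ss}$ ($h\in\mathcal B_{ss}^0$); $\|\mathcal L^n_{\omega,\epsilon}h\|_s\le C\lambda_1^n\|h\|_s+C\|h\|_w$ ($h\in\mathcal B_s$); $\|\mathcal L^n_{\omega,\epsilon}h\|_{ss}\le C\lambda_1^n\|h\|_{ss}+C\|h\|_s$ ($h\in\mathcal B_{ss}$); $\|(\mathcal L_{\omega,\epsilon}-\mathcal L_\omega)h\|_w\le C|\epsilon|\|h\|_s$ ($h\in\mathcal B_s$); $\|(\mathcal L_{\omega,\epsilon}-\mathcal L_\omega)h\|_s\le C|\epsilon|\|h\|_{ss}$ ($h\in\mathcal B_{ss}$); $\|\mathcal L^n_{\omega,\epsilon}\|_{\mathcal B_w\to\mathcal B_w}\le C$; $\psi(\mathcal L_{\omega,\epsilon}h)=\psi(h)$ ($h\in\mathcal B_s$). *)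

theory Defs
  imports "HOL-Probability.Probability"
begin

fun cocycle :: "('o \<Rightarrow> 'o) \<Rightarrow> ('o \<Rightarrow> 'a \<Rightarrow> 'a) \<Rightarrow> nat \<Rightarrow> 'o \<Rightarrow> 'a \<Rightarrow> 'a" where
  "cocycle \<sigma> L 0 \<omega> = id"
| "cocycle \<sigma> L (Suc n) \<omega> = cocycle \<sigma> L n (\<sigma> \<omega>) \<circ> L \<omega>"

definition invertible_mp_ergodic :: "'o measure \<Rightarrow> ('o \<Rightarrow> 'o) \<Rightarrow> bool" where
  "invertible_mp_ergodic M \<sigma> \<longleftrightarrow>
     \<sigma> \<in> measurable M M \<and>
     bij_betw \<sigma> (space M) (space M) \<and>
     inv_into (space M) \<sigma> \<in> measurable M M \<and>
     distr M M \<sigma> = M \<and>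
     (\<forall>A\<in>sets M. \<sigma> -` A \<inter> space M = A \<longrightarrow> measure M A = 0 \<or> measure M A = 1)"

end

theory Submission
  imports Defs
begin


lemma funpow_in: "\<forall>\<omega>\<in>S. \<sigma> \<omega> \<in> S \<Longrightarrow> \<omega> \<in> S \<Longrightarrow> (\<sigma> ^^ m) \<omega> \<in> S"
  by (induction m) auto

lemma cocycle_add: "cocycle \<sigma> A (m + n) \<omega> = cocycle \<sigma> A n ((\<sigma> ^^ m) \<omega>) \<circ> cocycle \<sigma> A m \<omega>"
  by (induction m arbitrary: \<omega>) (auto simp: funpow_swap1)

lemma cocycle_diff:
  assumes "\<forall>\<omega>\<in>S. \<sigma> \<omega> \<in> S" "\<forall>\<omega>\<in>S. \<forall>x y. A \<omega> (x - y) = A \<omega> x - A \<omega> y" "\<omega> \<in> S"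
  shows "cocycle \<sigma> A n \<omega> (x - y) = cocycle \<sigma> A n \<omega> x - cocycle \<sigma> A n \<omega> y"
  using assms(3) by (induction n arbitrary: \<omega> x y) (auto simp: assms(1,2))

lemma cocycle_P:
  assumes "\<forall>\<omega>\<in>S. \<sigma> \<omega> \<in> S" "\<forall>\<omega>\<in>S. \<forall>x. P x \<longrightarrow> P (A \<omega> x)" "\<omega> \<in> S" "P x"
  shows "P (cocycle \<sigma> A n \<omega> x)"
  using assms(3,4) by (induction n arbitrary: \<omega> x) (auto simp: assms(1,2))

lemma cocycle_comp:
  assumes "\<forall>\<omega>\<in>S. \<sigma> \<omega> \<in> S" "\<forall>\<omega>\<in>S. \<forall>x. j (A \<omega> x) = AW \<omega> (j x)" "\<omega> \<in> S"
  shows "j (cocycle \<sigma> A n \<omega> x) = cocycle \<sigma> AW n \<omega> (j x)"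
  using assms(3) by (induction n arbitrary: \<omega> x) (auto simp: assms(1,2))

lemma cocycle_pert:
  fixes A B :: "'o \<Rightarrow> 'a::real_normed_vector \<Rightarrow> 'a" and AW :: "'o \<Rightarrow> 'b::real_normed_vector \<Rightarrow> 'b"
    and j :: "'a \<Rightarrow> 'b"
  assumes \<sigma>S: "\<forall>\<omega>\<in>S. \<sigma> \<omega> \<in> S"
    and lin: "\<forall>\<omega>\<in>S. \<forall>x y. A \<omega> (x - y) = A \<omega> x - A \<omega> y"
    and jlin: "linear j"
    and comp: "\<forall>\<omega>\<in>S. \<forall>x. j (A \<omega> x) = AW \<omega> (j x)"
    and wb: "\<forall>\<omega>\<in>S. \<forall>n y. norm (cocycle \<sigma> AW n \<omega> y) \<le> K1 * norm y"
    and cl: "\<forall>\<omega>\<in>S. \<forall>x. norm (j (A \<omega> x) - j (B \<omega> x)) \<le> K2 * norm x"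
    and K1: "K1 \<ge> 0"
    and "\<omega> \<in> S"
  shows "norm (j (cocycle \<sigma> A n \<omega> x) - j (cocycle \<sigma> B n \<omega> x))
          \<le> K1 * K2 * (\<Sum>i<n. norm (cocycle \<sigma> B i \<omega> x))"
  using \<open>\<omega> \<in> S\<close>
proof (induction n arbitrary: \<omega> x)
  case 0
  then show ?case by simp
next
  case (Suc n)
  have s: "\<sigma> \<omega> \<in> S" using Suc.prems \<sigma>S by auto
  let ?An = "cocycle \<sigma> A n (\<sigma> \<omega>)" and ?Bn = "cocycle \<sigma> B n (\<sigma> \<omega>)"
  have eq: "j (cocycle \<sigma> A (Suc n) \<omega> x) - j (cocycle \<sigma> B (Suc n) \<omega> x)
     = j (?An (A \<omega> x - B \<omega> x)) + (j (?An (B \<omega> x)) - j (?Bn (B \<omega> x)))"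
    using cocycle_diff[OF \<sigma>S lin s] linear_diff[OF jlin] by simp
  have "norm (j (?An (A \<omega> x - B \<omega> x))) = norm (cocycle \<sigma> AW n (\<sigma> \<omega>) (j (A \<omega> x - B \<omega> x)))"
    using cocycle_comp[OF \<sigma>S comp s] by simp
  also have "\<dots> \<le> K1 * norm (j (A \<omega> x - B \<omega> x))" using wb s by blast
  also have "\<dots> \<le> K1 * (K2 * norm x)"
    using cl Suc.prems K1 linear_diff[OF jlin] by (simp add: mult_left_mono)
  finally have t1: "norm (j (?An (A \<omega> x - B \<omega> x))) \<le> K1 * K2 * norm x" by simp
  have t2: "norm (j (?An (B \<omega> x)) - j (?Bn (B \<omega> x))) \<le> K1 * K2 * (\<Sum>i<n. norm (cocycle \<sigma> B (Suc i) \<omega> x))"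
    using Suc.IH[OF s, of "B \<omega> x"] by simp
  have "(\<Sum>i<Suc n. norm (cocycle \<sigma> B i \<omega> x)) = norm x + (\<Sum>i<n. norm (cocycle \<sigma> B (Suc i) \<omega> x))"
    by (subst sum.lessThan_Suc_shift) simp
  then have sm: "K1 * K2 * (\<Sum>i<Suc n. norm (cocycle \<sigma> B i \<omega> x)) = K1 * K2 * norm x + K1 * K2 * (\<Sum>i<n. norm (cocycle \<sigma> B (Suc i) \<omega> x))"
    by (simp add: distrib_left)
  have "norm (j (cocycle \<sigma> A (Suc n) \<omega> x) - j (cocycle \<sigma> B (Suc n) \<omega> x))
     \<le> norm (j (?An (A \<omega> x - B \<omega> x))) + norm (j (?An (B \<omega> x)) - j (?Bn (B \<omega> x)))"
    unfolding eq by (rule norm_triangle_ineq)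
  then show ?case using t1 t2 sm by linarith
qed



lemma exists_N:
  fixes C D lam lam1 :: real
  assumes "C > 0" "D > 0" "lam > 0" "0 < lam1" "lam1 < 1"
  shows "\<exists>N::nat. N \<ge> 1 \<and> 2*C^2*lam1^N + C*D*exp(-lam*real N) \<le> 1/4"
proof -
  have q: "exp (-lam) < 1" "0 \<le> exp (-lam)" using assms by simp_all
  have e: "exp(-lam*real N) = exp (-lam) ^ N" for N
    using exp_of_nat_mult[of N "-lam"] by (simp add: mult.commute)
  have l1: "(\<lambda>N. lam1^N) \<longlonglongrightarrow> 0" by (rule LIMSEQ_power_zero) (use assms in simp)
  have l2: "(\<lambda>N. exp (-lam)^N) \<longlonglongrightarrow> 0" by (rule LIMSEQ_power_zero) (use q in simp)
  have "(\<lambda>N. 2*C^2*lam1^N + C*D*exp (-lam) ^ N) \<longlonglongrightarrow> 2*C^2*0 + C*D*0"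
    by (intro tendsto_add tendsto_mult_left l1 l2)
  then have "eventually (\<lambda>N. 2*C^2*lam1^N + C*D*exp (-lam) ^ N < 1/4) sequentially"
    by (intro order_tendstoD) auto
  then obtain N0 where N0: "\<And>N. N \<ge> N0 \<Longrightarrow> 2*C^2*lam1^N + C*D*exp (-lam) ^ N < 1/4"
    by (auto simp: eventually_sequentially)
  have "2*C^2*lam1^(max N0 1) + C*D*exp(-lam*real (max N0 1)) < 1/4"
    unfolding e by (rule N0) simp
  then show ?thesis
    by (intro exI[of _ "max N0 1"]) simp
qed

lemma abstract_decay:
  fixes A :: "real \<Rightarrow> 'o \<Rightarrow> 'a::real_normed_vector \<Rightarrow> 'a" and B :: "'o \<Rightarrow> 'a \<Rightarrow> 'a"
    and j :: "'a \<Rightarrow> 'b::real_normed_vector"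
    and C D lam lam1 K :: real
  assumes \<sigma>S: "\<forall>\<omega>\<in>S. \<sigma> \<omega> \<in> S"
    and cs: "C > 0" "D > 0" "lam > 0" "0 < lam1" "lam1 < 1" "K \<ge> 0"
    and jb: "\<forall>x. norm (j x) \<le> norm x"
    and Ppres: "\<forall>\<epsilon>\<in>I. \<forall>\<omega>\<in>S. \<forall>x. P x \<longrightarrow> P (A \<epsilon> \<omega> x)"
    and LY: "\<forall>\<epsilon>\<in>I. \<forall>\<omega>\<in>S. \<forall>n x. norm (cocycle \<sigma> (A \<epsilon>) n \<omega> x) \<le> C*lam1^n*norm x + C*norm (j x)"
    and dec: "\<forall>\<omega>\<in>S. \<forall>n x. P x \<longrightarrow> norm (cocycle \<sigma> B n \<omega> x) \<le> D*exp(-lam*real n)*norm x"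
    and diff: "\<forall>\<epsilon>\<in>I. \<forall>\<omega>\<in>S. \<forall>n x. norm (j (cocycle \<sigma> (A \<epsilon>) n \<omega> x) - j (cocycle \<sigma> B n \<omega> x))
                 \<le> K*\<bar>\<epsilon>\<bar> * (\<Sum>i<n. norm (cocycle \<sigma> B i \<omega> x))"
  shows "\<exists>\<epsilon>0>0. \<exists>D'>0. \<exists>lam'>0. \<forall>\<epsilon>\<in>I. \<bar>\<epsilon>\<bar> \<le> \<epsilon>0 \<longrightarrow>
     (\<forall>\<omega>\<in>S. \<forall>n. \<forall>x. P x \<longrightarrow> norm (cocycle \<sigma> (A \<epsilon>) n \<omega> x) \<le> D' * exp(-lam' * real n) * norm x)"
proof -
  obtain N :: nat where N1: "N \<ge> 1" and NN: "2*C^2*lam1^N + C*D*exp(-lam*real N) \<le> 1/4"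
    using exists_N[OF cs(1-5)] by blast
  define \<epsilon>0 where "\<epsilon>0 = 1/(4*(C*K*real N*D+1))"
  have CKND: "C*K*real N*D \<ge> 0" using cs by simp
  have e0: "\<epsilon>0 > 0" unfolding \<epsilon>0_def using CKND by simp
  have e0b: "C*K*real N*D*\<epsilon>0 \<le> 1/4"
    unfolding \<epsilon>0_def using CKND by (simp add: field_simps)
  have bnd: "norm (cocycle \<sigma> (A \<epsilon>) n \<omega> x) \<le> 2*C*norm x" if "\<epsilon>\<in>I" "\<omega>\<in>S" for \<epsilon> \<omega> n x
  proof -
    have "lam1^n \<le> 1" using cs by (simp add: power_le_one)
    then have "lam1^n*norm x \<le> norm x" by (intro mult_left_le_one_le) (use cs in auto)
    then have "C*lam1^n*norm x \<le> C*norm x" using cs by (metis mult.assoc mult_left_mono less_imp_le)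
    moreover have "C*norm (j x) \<le> C*norm x" using jb cs by (simp add: mult_left_mono)
    moreover have "norm (cocycle \<sigma> (A \<epsilon>) n \<omega> x) \<le> C*lam1^n*norm x + C*norm (j x)"
      using LY that by blast
    ultimately show ?thesis by linarith
  qed
  have step: "norm (cocycle \<sigma> (A \<epsilon>) (2*N) \<omega> x) \<le> 1/2 * norm x"
    if "\<epsilon>\<in>I" "\<bar>\<epsilon>\<bar> \<le> \<epsilon>0" "\<omega>\<in>S" "P x" for \<epsilon> \<omega> x
  proof -
    define y where "y = cocycle \<sigma> (A \<epsilon>) N \<omega> x"
    have \<omega>N: "(\<sigma>^^N) \<omega> \<in> S" using funpow_in[OF \<sigma>S that(3)] .
    have split: "cocycle \<sigma> (A \<epsilon>) (2*N) \<omega> x = cocycle \<sigma> (A \<epsilon>) N ((\<sigma>^^N) \<omega>) y"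
      using cocycle_add[of \<sigma> "A \<epsilon>" N N \<omega>] unfolding y_def by (simp add: mult_2)
    have ny: "norm y \<le> 2*C*norm x" unfolding y_def using bnd that by blast
    have sumb: "(\<Sum>i<N. norm (cocycle \<sigma> B i \<omega> x)) \<le> real N * (D * norm x)"
    proof -
      have "(\<Sum>i<N. norm (cocycle \<sigma> B i \<omega> x)) \<le> (\<Sum>i<N. D * norm x)"
      proof (rule sum_mono)
        fix i assume "i \<in> {..<N}"
        have "exp(-lam*real i) \<le> 1" using cs by simp
        then have "exp(-lam*real i)*norm x \<le> norm x" by (intro mult_left_le_one_le) auto
        then have "D*exp(-lam*real i)*norm x \<le> D*norm x"
          using cs by (metis mult.assoc mult_left_mono less_imp_le)
        moreover have "norm (cocycle \<sigma> B i \<omega> x) \<le> D*exp(-lam*real i)*norm x"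
          using dec that(3,4) by blast
        ultimately show "norm (cocycle \<sigma> B i \<omega> x) \<le> D * norm x" by linarith
      qed
      then show ?thesis by simp
    qed
    have "K*\<bar>\<epsilon>\<bar> * (\<Sum>i<N. norm (cocycle \<sigma> B i \<omega> x)) \<le> K*\<bar>\<epsilon>\<bar> * (real N * (D * norm x))"
      using sumb cs by (simp add: mult_left_mono)
    moreover have "norm (j y - j (cocycle \<sigma> B N \<omega> x)) \<le> K*\<bar>\<epsilon>\<bar> * (\<Sum>i<N. norm (cocycle \<sigma> B i \<omega> x))"
      using diff that(1,3) unfolding y_def by blast
    ultimately have "norm (j y - j (cocycle \<sigma> B N \<omega> x)) \<le> K*\<bar>\<epsilon>\<bar> * (real N * (D * norm x))"
      by linarith
    moreover have "norm (j (cocycle \<sigma> B N \<omega> x)) \<le> D*exp(-lam*real N)*norm x"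
    proof -
      have "norm (cocycle \<sigma> B N \<omega> x) \<le> D*exp(-lam*real N)*norm x" using dec that(3,4) by blast
      then show ?thesis using jb order_trans by blast
    qed
    ultimately have njy: "norm (j y) \<le> D*exp(-lam*real N)*norm x + K*\<bar>\<epsilon>\<bar> * (real N * (D * norm x))"
      using norm_triangle_ineq2[of "j y" "j (cocycle \<sigma> B N \<omega> x)"] by linarith
    have "norm (cocycle \<sigma> (A \<epsilon>) (2*N) \<omega> x) \<le> C*lam1^N*norm y + C*norm (j y)"
      unfolding split using LY that \<omega>N by blast
    also have "\<dots> \<le> C*lam1^N*(2*C*norm x) + C*(D*exp(-lam*real N)*norm x + K*\<bar>\<epsilon>\<bar> * (real N * (D * norm x)))"
      using ny njy cs by (intro add_mono mult_left_mono) auto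
    also have "\<dots> = (2*C^2*lam1^N + C*D*exp(-lam*real N)) * norm x + (C*K*real N*D*\<bar>\<epsilon>\<bar>) * norm x"
      by (simp add: algebra_simps power2_eq_square)
    also have "\<dots> \<le> 1/4 * norm x + 1/4 * norm x"
    proof (intro add_mono mult_right_mono)
      show "C*K*real N*D*\<bar>\<epsilon>\<bar> \<le> 1/4"
        using e0b mult_left_mono[OF that(2) CKND] by linarith
    qed (use NN in auto)
    finally show ?thesis by simp
  qed
  have iter: "norm (cocycle \<sigma> (A \<epsilon>) (2*N*k) \<omega> x) \<le> (1/2)^k * norm x"
    if "\<epsilon>\<in>I" "\<bar>\<epsilon>\<bar> \<le> \<epsilon>0" "\<omega>\<in>S" "P x" for \<epsilon> k \<omega> x
    using that(3,4)
  proof (induction k arbitrary: \<omega> x)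
    case 0
    then show ?case by simp
  next
    case (Suc k)
    have Pp: "\<forall>\<omega>\<in>S. \<forall>x. P x \<longrightarrow> P (A \<epsilon> \<omega> x)" using Ppres that(1) by blast
    have eqs: "cocycle \<sigma> (A \<epsilon>) (2*N*Suc k) \<omega> x
       = cocycle \<sigma> (A \<epsilon>) (2*N) ((\<sigma>^^(2*N*k)) \<omega>) (cocycle \<sigma> (A \<epsilon>) (2*N*k) \<omega> x)"
      using cocycle_add[of \<sigma> "A \<epsilon>" "2*N*k" "2*N" \<omega>] by (simp add: add.commute)
    have "norm (cocycle \<sigma> (A \<epsilon>) (2*N*Suc k) \<omega> x) \<le> 1/2 * norm (cocycle \<sigma> (A \<epsilon>) (2*N*k) \<omega> x)"
      unfolding eqs
      by (rule step[OF that(1,2) funpow_in[OF \<sigma>S Suc.prems(1)] cocycle_P[OF \<sigma>S Pp Suc.prems]])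
    also have "\<dots> \<le> 1/2 * ((1/2)^k * norm x)" using Suc by simp
    finally show ?case by simp
  qed
  define lam' where "lam' = ln 2 / (2 * real N)"
  have lam'pos: "lam' > 0" unfolding lam'_def using N1 by simp
  have final: "norm (cocycle \<sigma> (A \<epsilon>) n \<omega> x) \<le> (4*C) * exp(-lam' * real n) * norm x"
    if "\<epsilon>\<in>I" "\<bar>\<epsilon>\<bar> \<le> \<epsilon>0" "\<omega>\<in>S" "P x" for \<epsilon> \<omega> n x
  proof -
    define k where "k = n div (2*N)"
    define r where "r = n mod (2*N)"
    have nkr: "n = 2*N*k + r" unfolding k_def r_def by simp
    have rlt: "r < 2*N" unfolding r_def using N1 by simp
    have eqs: "cocycle \<sigma> (A \<epsilon>) n \<omega> x
       = cocycle \<sigma> (A \<epsilon>) r ((\<sigma>^^(2*N*k)) \<omega>) (cocycle \<sigma> (A \<epsilon>) (2*N*k) \<omega> x)"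
      using cocycle_add[of \<sigma> "A \<epsilon>" "2*N*k" r \<omega>] nkr by simp
    have "norm (cocycle \<sigma> (A \<epsilon>) n \<omega> x) \<le> 2*C*norm (cocycle \<sigma> (A \<epsilon>) (2*N*k) \<omega> x)"
      unfolding eqs by (rule bnd[OF that(1) funpow_in[OF \<sigma>S that(3)]])
    also have "\<dots> \<le> 2*C*((1/2)^k * norm x)"
      using iter[OF that] cs by (simp add: mult_left_mono)
    also have "(1/2::real)^k \<le> 2 * exp(-lam' * real n)"
    proof -
      have h: "(1/2::real)^k = exp(- real k * ln 2)"
      proof -
        have "exp(- real k * ln 2) = exp (-ln 2) ^ k"
          by (metis exp_of_nat_mult mult.commute mult_minus_left)
        also have "exp (-ln 2) = 1/(2::real)" by (simp add: exp_minus)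
        finally show ?thesis by simp
      qed
      have "n < 2*N*(k+1)" using nkr rlt by simp
      then have "real n < real (2*N*(k+1))" by (simp only: of_nat_less_iff)
      then have "real n < 2*real N*(real k+1)" by (simp add: algebra_simps)
      then have "real n / (2*real N) < real k + 1" using N1 by (simp add: field_simps)
      then have "ln 2 * (real n / (2*real N)) < ln 2 * (real k + 1)"
        by (intro mult_strict_left_mono) auto
      moreover have "lam' * real n = ln 2 * (real n / (2*real N))" unfolding lam'_def by simp
      ultimately have "lam' * real n < (real k + 1) * ln 2" by (simp add: mult.commute)
      then have "- real k * ln 2 \<le> -lam' * real n + ln 2" by (simp add: algebra_simps)
      then have "exp(- real k * ln 2) \<le> exp(-lam' * real n + ln 2)" by simp
      also have "\<dots> = 2 * exp(-lam' * real n)" by (simp only: exp_add exp_ln_iff) (simp add: mult.commute)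
      finally show ?thesis using h by simp
    qed
    then have "2*C*((1/2)^k * norm x) \<le> 2*C*((2 * exp(-lam' * real n)) * norm x)"
      using cs by (intro mult_left_mono mult_right_mono) auto
    finally show ?thesis by simp
  qed
  show ?thesis
    apply (rule exI[of _ \<epsilon>0], intro conjI e0)
    apply (rule exI[of _ "4*C"], intro conjI)
    using cs apply simp
    apply (rule exI[of _ lam'], intro conjI lam'pos)
    using final by blast
qed



theorem lemma3p6:
  fixes M :: "'o measure" and \<sigma> :: "'o \<Rightarrow> 'o"
    and incl_s :: "'s::banach \<Rightarrow> 'w::banach"
    and incl_ss :: "'ss::banach \<Rightarrow> 's"
    and \<psi> :: "'s \<Rightarrow> real" and \<psi>w :: "'w \<Rightarrow> real"
    and I :: "real set"
    and Lw :: "'o \<Rightarrow> real \<Rightarrow> 'w \<Rightarrow> 'w"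
    and Ls :: "'o \<Rightarrow> real \<Rightarrow> 's \<Rightarrow> 's"
    and Lss :: "'o \<Rightarrow> real \<Rightarrow> 'ss \<Rightarrow> 'ss"
    and \<Omega>' :: "'o set"
    and C D lam lam1 :: real
  assumes M: "prob_space M"
    and sigma: "invertible_mp_ergodic M \<sigma>"
    \<comment> \<open>continuous inclusions B_ss \<subseteq> B_s \<subseteq> B_w with norm inequalities\<close>
    and incl_s: "bounded_linear incl_s" "inj incl_s" "\<And>h. norm (incl_s h) \<le> norm h"
    and incl_ss: "bounded_linear incl_ss" "inj incl_ss" "\<And>h. norm (incl_ss h) \<le> norm h"
    \<comment> \<open>psi: nonzero bounded functional on B_s with bounded extension to B_w\<close>
    and psi: "bounded_linear \<psi>" "\<psi> \<noteq> (\<lambda>_. 0)"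
    and psiw: "bounded_linear \<psi>w" "\<And>h. \<psi>w (incl_s h) = \<psi> h"
    \<comment> \<open>the parameter interval\<close>
    and I: "is_interval I" "0 \<in> I"
    \<comment> \<open>the operators act boundedly on all three spaces, compatibly with the inclusions\<close>
    and Lbl: "\<And>\<omega> \<epsilon>. \<omega> \<in> space M \<Longrightarrow> \<epsilon> \<in> I \<Longrightarrow>
        bounded_linear (Lw \<omega> \<epsilon>) \<and> bounded_linear (Ls \<omega> \<epsilon>) \<and> bounded_linear (Lss \<omega> \<epsilon>)"
    and Lcompat_s: "\<And>\<omega> \<epsilon> h. \<omega> \<in> space M \<Longrightarrow> \<epsilon> \<in> I \<Longrightarrow> incl_s (Ls \<omega> \<epsilon> h) = Lw \<omega> \<epsilon> (incl_s h)"
    and Lcompat_ss: "\<And>\<omega> \<epsilon> h. \<omega> \<in> space M \<Longrightarrow> \<epsilon> \<in> I \<Longrightarrow> incl_ss (Lss \<omega> \<epsilon> h) = Ls \<omega> \<epsilon> (incl_ss h)"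
    \<comment> \<open>measurability\<close>
    and meas_s: "\<And>\<epsilon> h. \<epsilon> \<in> I \<Longrightarrow> (\<lambda>\<omega>. Ls \<omega> \<epsilon> h) \<in> borel_measurable M"
    and meas_ss: "\<And>\<epsilon> h. \<epsilon> \<in> I \<Longrightarrow> (\<lambda>\<omega>. Lss \<omega> \<epsilon> h) \<in> borel_measurable M"
    \<comment> \<open>constants\<close>
    and constants: "C > 0" "D > 0" "lam > 0" "0 < lam1" "lam1 < 1"
    \<comment> \<open>the full-measure invariant set\<close>
    and Om: "\<Omega>' \<in> sets M" "measure M \<Omega>' = 1" "\<And>\<omega>. \<omega> \<in> space M \<Longrightarrow> \<sigma> \<omega> \<in> \<Omega>' \<longleftrightarrow> \<omega> \<in> \<Omega>'"
    \<comment> \<open>exponential decay of the unperturbed cocycle\<close>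
    and dec_s: "\<And>\<omega> n h. \<omega> \<in> \<Omega>' \<Longrightarrow> \<psi> h = 0 \<Longrightarrow>
        norm (cocycle \<sigma> (\<lambda>\<omega>. Ls \<omega> 0) n \<omega> h) \<le> D * exp (- lam * real n) * norm h"
    and dec_ss: "\<And>\<omega> n h. \<omega> \<in> \<Omega>' \<Longrightarrow> \<psi> (incl_ss h) = 0 \<Longrightarrow>
        norm (cocycle \<sigma> (\<lambda>\<omega>. Lss \<omega> 0) n \<omega> h) \<le> D * exp (- lam * real n) * norm h"
    \<comment> \<open>Lasota-Yorke inequalities\<close>
    and LY_s: "\<And>\<epsilon> \<omega> n h. \<epsilon> \<in> I \<Longrightarrow> \<omega> \<in> \<Omega>' \<Longrightarrow>
        norm (cocycle \<sigma> (\<lambda>\<omega>. Ls \<omega> \<epsilon>) n \<omega> h) \<le> C * lam1 ^ n * norm h + C * norm (incl_s h)"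
    and LY_ss: "\<And>\<epsilon> \<omega> n h. \<epsilon> \<in> I \<Longrightarrow> \<omega> \<in> \<Omega>' \<Longrightarrow>
        norm (cocycle \<sigma> (\<lambda>\<omega>. Lss \<omega> \<epsilon>) n \<omega> h) \<le> C * lam1 ^ n * norm h + C * norm (incl_ss h)"
    \<comment> \<open>closeness of the perturbed operators\<close>
    and close_w: "\<And>\<epsilon> \<omega> h. \<epsilon> \<in> I \<Longrightarrow> \<omega> \<in> \<Omega>' \<Longrightarrow>
        norm (Lw \<omega> \<epsilon> (incl_s h) - Lw \<omega> 0 (incl_s h)) \<le> C * \<bar>\<epsilon>\<bar> * norm h"
    and close_s: "\<And>\<epsilon> \<omega> h. \<epsilon> \<in> I \<Longrightarrow> \<omega> \<in> \<Omega>' \<Longrightarrow>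
        norm (Ls \<omega> \<epsilon> (incl_ss h) - Ls \<omega> 0 (incl_ss h)) \<le> C * \<bar>\<epsilon>\<bar> * norm h"
    \<comment> \<open>uniform weak-norm bound\<close>
    and bound_w: "\<And>\<epsilon> \<omega> n h. \<epsilon> \<in> I \<Longrightarrow> \<omega> \<in> \<Omega>' \<Longrightarrow>
        norm (cocycle \<sigma> (\<lambda>\<omega>. Lw \<omega> \<epsilon>) n \<omega> h) \<le> C * norm h"
    \<comment> \<open>psi is preserved\<close>
    and psi_pres: "\<And>\<epsilon> \<omega> h. \<epsilon> \<in> I \<Longrightarrow> \<omega> \<in> \<Omega>' \<Longrightarrow> \<psi> (Ls \<omega> \<epsilon> h) = \<psi> h"
  shows "\<exists>\<epsilon>\<^sub>0 > 0. \<exists>D' > 0. \<exists>lam' > 0. \<forall>\<epsilon>\<in>I. \<bar>\<epsilon>\<bar> \<le> \<epsilon>\<^sub>0 \<longrightarrow> (\<forall>\<omega>\<in>\<Omega>'. \<forall>n::nat.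
      (\<forall>h. \<psi> (incl_ss h) = 0 \<longrightarrow>
         norm (cocycle \<sigma> (\<lambda>\<omega>. Lss \<omega> \<epsilon>) n \<omega> h) \<le> D' * exp (- lam' * real n) * norm h) \<and>
      (\<forall>h. \<psi> h = 0 \<longrightarrow>
         norm (cocycle \<sigma> (\<lambda>\<omega>. Ls \<omega> \<epsilon>) n \<omega> h) \<le> D' * exp (- lam' * real n) * norm h))"
proof -
  have Osp: "\<Omega>' \<subseteq> space M" using Om(1) sets.sets_into_space by blast
  have \<sigma>S: "\<forall>\<omega>\<in>\<Omega>'. \<sigma> \<omega> \<in> \<Omega>'" using Om(3) Osp by blast
  have I0: "0 \<in> I" using I(2) .
  have lin_s: "\<forall>\<omega>\<in>\<Omega>'. \<forall>x y. Ls \<omega> \<epsilon> (x - y) = Ls \<omega> \<epsilon> x - Ls \<omega> \<epsilon> y" if "\<epsilon> \<in> I" for \<epsilon>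
  proof (intro ballI allI)
    fix \<omega> x y assume "\<omega> \<in> \<Omega>'"
    then have bl: "bounded_linear (Ls \<omega> \<epsilon>)" using Lbl Osp that by blast
    show "Ls \<omega> \<epsilon> (x - y) = Ls \<omega> \<epsilon> x - Ls \<omega> \<epsilon> y" using bounded_linear.linear[OF bl] by (simp add: linear_diff)
  qed
  have lin_ss: "\<forall>\<omega>\<in>\<Omega>'. \<forall>x y. Lss \<omega> \<epsilon> (x - y) = Lss \<omega> \<epsilon> x - Lss \<omega> \<epsilon> y" if "\<epsilon> \<in> I" for \<epsilon>
  proof (intro ballI allI)
    fix \<omega> x y assume "\<omega> \<in> \<Omega>'"
    then have bl: "bounded_linear (Lss \<omega> \<epsilon>)" using Lbl Osp that by blast
    show "Lss \<omega> \<epsilon> (x - y) = Lss \<omega> \<epsilon> x - Lss \<omega> \<epsilon> y" using bounded_linear.linear[OF bl] by (simp add: linear_diff)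
  qed
  have jlin_s: "linear incl_s" using incl_s(1) bounded_linear.linear by blast
  have jlin_ss: "linear incl_ss" using incl_ss(1) bounded_linear.linear by blast
  have diff_s: "\<forall>\<epsilon>\<in>I. \<forall>\<omega>\<in>\<Omega>'. \<forall>n x. norm (incl_s (cocycle \<sigma> (\<lambda>\<omega>. Ls \<omega> \<epsilon>) n \<omega> x) - incl_s (cocycle \<sigma> (\<lambda>\<omega>. Ls \<omega> 0) n \<omega> x))
                 \<le> C^2*\<bar>\<epsilon>\<bar> * (\<Sum>i<n. norm (cocycle \<sigma> (\<lambda>\<omega>. Ls \<omega> 0) i \<omega> x))"
  proof (intro ballI allI)
    fix \<epsilon> \<omega> n x assume e: "\<epsilon> \<in> I" and w: "\<omega> \<in> \<Omega>'"
    have "norm (incl_s (cocycle \<sigma> (\<lambda>\<omega>. Ls \<omega> \<epsilon>) n \<omega> x) - incl_s (cocycle \<sigma> (\<lambda>\<omega>. Ls \<omega> 0) n \<omega> x))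
          \<le> C * (C*\<bar>\<epsilon>\<bar>) * (\<Sum>i<n. norm (cocycle \<sigma> (\<lambda>\<omega>. Ls \<omega> 0) i \<omega> x))"
    proof (rule cocycle_pert[OF \<sigma>S lin_s[OF e] jlin_s _ _ _ _ w, where AW = "\<lambda>\<omega>. Lw \<omega> \<epsilon>"])
      show "\<forall>\<omega>\<in>\<Omega>'. \<forall>x. incl_s (Ls \<omega> \<epsilon> x) = Lw \<omega> \<epsilon> (incl_s x)"
        using Lcompat_s Osp e by blast
      show "\<forall>\<omega>\<in>\<Omega>'. \<forall>n y. norm (cocycle \<sigma> (\<lambda>\<omega>. Lw \<omega> \<epsilon>) n \<omega> y) \<le> C * norm y"
        using bound_w e by blast
      show "\<forall>\<omega>\<in>\<Omega>'. \<forall>x. norm (incl_s (Ls \<omega> \<epsilon> x) - incl_s (Ls \<omega> 0 x)) \<le> C * \<bar>\<epsilon>\<bar> * norm x"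
        using close_w Lcompat_s Osp e I0 by (metis subsetD)
      show "C \<ge> 0" using constants by simp
    qed
    then show "norm (incl_s (cocycle \<sigma> (\<lambda>\<omega>. Ls \<omega> \<epsilon>) n \<omega> x) - incl_s (cocycle \<sigma> (\<lambda>\<omega>. Ls \<omega> 0) n \<omega> x))
                 \<le> C^2*\<bar>\<epsilon>\<bar> * (\<Sum>i<n. norm (cocycle \<sigma> (\<lambda>\<omega>. Ls \<omega> 0) i \<omega> x))"
      by (simp add: power2_eq_square mult.assoc)
  qed
  have AS_jb: "\<forall>x. norm (incl_s x) \<le> norm x" using incl_s(3) by blast
  have AS_Pp: "\<forall>\<epsilon>\<in>I. \<forall>\<omega>\<in>\<Omega>'. \<forall>x. \<psi> x = 0 \<longrightarrow> \<psi> (Ls \<omega> \<epsilon> x) = 0" using psi_pres by simp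
  have AS_LYx: "\<forall>\<epsilon>\<in>I. \<forall>\<omega>\<in>\<Omega>'. \<forall>n x. norm (cocycle \<sigma> (\<lambda>\<omega>. Ls \<omega> \<epsilon>) n \<omega> x) \<le> C*lam1^n*norm x + C*norm (incl_s x)"
    using LY_s by blast
  have AS_decx: "\<forall>\<omega>\<in>\<Omega>'. \<forall>n x. \<psi> x = 0 \<longrightarrow> norm (cocycle \<sigma> (\<lambda>\<omega>. Ls \<omega> 0) n \<omega> x) \<le> D*exp(-lam*real n)*norm x"
    using dec_s by blast
  have AS_diffx: "\<forall>\<epsilon>\<in>I. \<forall>\<omega>\<in>\<Omega>'. \<forall>n x. norm (incl_s (cocycle \<sigma> (\<lambda>\<omega>. Ls \<omega> \<epsilon>) n \<omega> x) - incl_s (cocycle \<sigma> (\<lambda>\<omega>. Ls \<omega> 0) n \<omega> x))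
               \<le> C^2*\<bar>\<epsilon>\<bar> * (\<Sum>i<n. norm (cocycle \<sigma> (\<lambda>\<omega>. Ls \<omega> 0) i \<omega> x))"
    by (rule diff_s)
  have AS_cc: "C > 0" "D > 0" "lam > 0" "0 < lam1" "lam1 < 1" using constants by simp_all
  have AS_Kc: "C^2 \<ge> 0" by simp

  have AS: "\<exists>\<epsilon>0>0. \<exists>D'>0. \<exists>lam'>0. \<forall>\<epsilon>\<in>I. \<bar>\<epsilon>\<bar> \<le> \<epsilon>0 \<longrightarrow>
     (\<forall>\<omega>\<in>\<Omega>'. \<forall>n. \<forall>x. \<psi> x = 0 \<longrightarrow> norm (cocycle \<sigma> (\<lambda>\<omega>. Ls \<omega> \<epsilon>) n \<omega> x) \<le> D' * exp(-lam' * real n) * norm x)"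
    by (rule abstract_decay[where A = "\<lambda>\<epsilon> \<omega>. Ls \<omega> \<epsilon>" and B = "\<lambda>\<omega>. Ls \<omega> 0", OF \<sigma>S AS_cc AS_Kc AS_jb AS_Pp AS_LYx AS_decx AS_diffx])
  have diff_ss: "\<forall>\<epsilon>\<in>I. \<forall>\<omega>\<in>\<Omega>'. \<forall>n x. norm (incl_ss (cocycle \<sigma> (\<lambda>\<omega>. Lss \<omega> \<epsilon>) n \<omega> x) - incl_ss (cocycle \<sigma> (\<lambda>\<omega>. Lss \<omega> 0) n \<omega> x))
                 \<le> (2*C^2)*\<bar>\<epsilon>\<bar> * (\<Sum>i<n. norm (cocycle \<sigma> (\<lambda>\<omega>. Lss \<omega> 0) i \<omega> x))"
  proof (intro ballI allI)
    fix \<epsilon> \<omega> n x assume e: "\<epsilon> \<in> I" and w: "\<omega> \<in> \<Omega>'"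
    have "norm (incl_ss (cocycle \<sigma> (\<lambda>\<omega>. Lss \<omega> \<epsilon>) n \<omega> x) - incl_ss (cocycle \<sigma> (\<lambda>\<omega>. Lss \<omega> 0) n \<omega> x))
          \<le> (2*C) * (C*\<bar>\<epsilon>\<bar>) * (\<Sum>i<n. norm (cocycle \<sigma> (\<lambda>\<omega>. Lss \<omega> 0) i \<omega> x))"
    proof (rule cocycle_pert[OF \<sigma>S lin_ss[OF e] jlin_ss _ _ _ _ w, where AW = "\<lambda>\<omega>. Ls \<omega> \<epsilon>"])
      show "\<forall>\<omega>\<in>\<Omega>'. \<forall>x. incl_ss (Lss \<omega> \<epsilon> x) = Ls \<omega> \<epsilon> (incl_ss x)"
        using Lcompat_ss Osp e by blast
      show "\<forall>\<omega>\<in>\<Omega>'. \<forall>n y. norm (cocycle \<sigma> (\<lambda>\<omega>. Ls \<omega> \<epsilon>) n \<omega> y) \<le> 2 * C * norm y"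
      proof (intro ballI allI)
        fix \<omega> n and y :: 's assume w: "\<omega> \<in> \<Omega>'"
        have "lam1^n \<le> 1" using constants by (simp add: power_le_one)
        then have "lam1^n*norm y \<le> norm y" by (intro mult_left_le_one_le) (use constants in auto)
        then have "C*lam1^n*norm y \<le> C*norm y" using constants by (metis mult.assoc mult_left_mono less_imp_le)
        moreover have "C*norm (incl_s y) \<le> C*norm y" using incl_s(3) constants by (simp add: mult_left_mono)
        moreover have "norm (cocycle \<sigma> (\<lambda>\<omega>. Ls \<omega> \<epsilon>) n \<omega> y) \<le> C*lam1^n*norm y + C*norm (incl_s y)"
          using LY_s e w by blast
        ultimately show "norm (cocycle \<sigma> (\<lambda>\<omega>. Ls \<omega> \<epsilon>) n \<omega> y) \<le> 2 * C * norm y" by linarith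
      qed
      show "\<forall>\<omega>\<in>\<Omega>'. \<forall>x. norm (incl_ss (Lss \<omega> \<epsilon> x) - incl_ss (Lss \<omega> 0 x)) \<le> C * \<bar>\<epsilon>\<bar> * norm x"
        using close_s Lcompat_ss Osp e I0 by (metis subsetD)
      show "2 * C \<ge> 0" using constants by simp
    qed
    then show "norm (incl_ss (cocycle \<sigma> (\<lambda>\<omega>. Lss \<omega> \<epsilon>) n \<omega> x) - incl_ss (cocycle \<sigma> (\<lambda>\<omega>. Lss \<omega> 0) n \<omega> x))
                 \<le> (2*C^2)*\<bar>\<epsilon>\<bar> * (\<Sum>i<n. norm (cocycle \<sigma> (\<lambda>\<omega>. Lss \<omega> 0) i \<omega> x))"
      by (simp add: power2_eq_square mult.assoc mult.left_commute)
  qed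
  have ASS_jb: "\<forall>x. norm (incl_ss x) \<le> norm x" using incl_ss(3) by blast
  have ASS_Pp: "\<forall>\<epsilon>\<in>I. \<forall>\<omega>\<in>\<Omega>'. \<forall>x. \<psi> (incl_ss x) = 0 \<longrightarrow> \<psi> (incl_ss (Lss \<omega> \<epsilon> x)) = 0"
    using psi_pres Lcompat_ss Osp by (metis subsetD)
  have ASS_LYx: "\<forall>\<epsilon>\<in>I. \<forall>\<omega>\<in>\<Omega>'. \<forall>n x. norm (cocycle \<sigma> (\<lambda>\<omega>. Lss \<omega> \<epsilon>) n \<omega> x) \<le> C*lam1^n*norm x + C*norm (incl_ss x)"
    using LY_ss by blast
  have ASS_decx: "\<forall>\<omega>\<in>\<Omega>'. \<forall>n x. \<psi> (incl_ss x) = 0 \<longrightarrow> norm (cocycle \<sigma> (\<lambda>\<omega>. Lss \<omega> 0) n \<omega> x) \<le> D*exp(-lam*real n)*norm x"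
    using dec_ss by blast
  have ASS_diffx: "\<forall>\<epsilon>\<in>I. \<forall>\<omega>\<in>\<Omega>'. \<forall>n x. norm (incl_ss (cocycle \<sigma> (\<lambda>\<omega>. Lss \<omega> \<epsilon>) n \<omega> x) - incl_ss (cocycle \<sigma> (\<lambda>\<omega>. Lss \<omega> 0) n \<omega> x))
               \<le> (2*C^2)*\<bar>\<epsilon>\<bar> * (\<Sum>i<n. norm (cocycle \<sigma> (\<lambda>\<omega>. Lss \<omega> 0) i \<omega> x))"
    by (rule diff_ss)
  have ASS_cc: "C > 0" "D > 0" "lam > 0" "0 < lam1" "lam1 < 1" using constants by simp_all
  have ASS_Kc: "2*C^2 \<ge> 0" by simp

  have ASS: "\<exists>\<epsilon>0>0. \<exists>D'>0. \<exists>lam'>0. \<forall>\<epsilon>\<in>I. \<bar>\<epsilon>\<bar> \<le> \<epsilon>0 \<longrightarrow>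
     (\<forall>\<omega>\<in>\<Omega>'. \<forall>n. \<forall>x. \<psi> (incl_ss x) = 0 \<longrightarrow> norm (cocycle \<sigma> (\<lambda>\<omega>. Lss \<omega> \<epsilon>) n \<omega> x) \<le> D' * exp(-lam' * real n) * norm x)"
    by (rule abstract_decay[where A = "\<lambda>\<epsilon> \<omega>. Lss \<omega> \<epsilon>" and B = "\<lambda>\<omega>. Lss \<omega> 0", OF \<sigma>S ASS_cc ASS_Kc ASS_jb ASS_Pp ASS_LYx ASS_decx ASS_diffx])
  obtain e1 D1 l1 where e1: "e1 > 0" "D1 > 0" "l1 > 0" and h1: "\<forall>\<epsilon>\<in>I. \<bar>\<epsilon>\<bar> \<le> e1 \<longrightarrow>
     (\<forall>\<omega>\<in>\<Omega>'. \<forall>n. \<forall>x. \<psi> x = 0 \<longrightarrow> norm (cocycle \<sigma> (\<lambda>\<omega>. Ls \<omega> \<epsilon>) n \<omega> x) \<le> D1 * exp(-l1 * real n) * norm x)"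
    using AS by blast
  obtain e2 D2 l2 where e2: "e2 > 0" "D2 > 0" "l2 > 0" and h2: "\<forall>\<epsilon>\<in>I. \<bar>\<epsilon>\<bar> \<le> e2 \<longrightarrow>
     (\<forall>\<omega>\<in>\<Omega>'. \<forall>n. \<forall>x. \<psi> (incl_ss x) = 0 \<longrightarrow> norm (cocycle \<sigma> (\<lambda>\<omega>. Lss \<omega> \<epsilon>) n \<omega> x) \<le> D2 * exp(-l2 * real n) * norm x)"
    using ASS by blast
  have mono: "Di * exp(-li * real n) * t \<le> max D1 D2 * exp(- min l1 l2 * real n) * t"
    if "Di \<le> max D1 D2" "min l1 l2 \<le> li" "t \<ge> 0" "Di > 0" for Di li t :: real and n :: nat
  proof -
    have "exp(-li * real n) \<le> exp(- min l1 l2 * real n)"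
      using that(2) by (simp add: mult_right_mono)
    then have "Di * exp(-li * real n) \<le> max D1 D2 * exp(- min l1 l2 * real n)"
      using that by (intro mult_mono) auto
    then show ?thesis using that(3) by (rule mult_right_mono)
  qed
  have B: "\<forall>\<epsilon>\<in>I. \<bar>\<epsilon>\<bar> \<le> min e1 e2 \<longrightarrow> (\<forall>\<omega>\<in>\<Omega>'. \<forall>n::nat.
      (\<forall>h. \<psi> (incl_ss h) = 0 \<longrightarrow>
         norm (cocycle \<sigma> (\<lambda>\<omega>. Lss \<omega> \<epsilon>) n \<omega> h) \<le> max D1 D2 * exp (- min l1 l2 * real n) * norm h) \<and>
      (\<forall>h. \<psi> h = 0 \<longrightarrow>
         norm (cocycle \<sigma> (\<lambda>\<omega>. Ls \<omega> \<epsilon>) n \<omega> h) \<le> max D1 D2 * exp (- min l1 l2 * real n) * norm h))"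
  proof (intro ballI allI impI conjI)
    fix \<epsilon> \<omega> n h assume "\<epsilon> \<in> I" "\<bar>\<epsilon>\<bar> \<le> min e1 e2" "\<omega> \<in> \<Omega>'" "\<psi> (incl_ss h) = 0"
    then have "norm (cocycle \<sigma> (\<lambda>\<omega>. Lss \<omega> \<epsilon>) n \<omega> h) \<le> D2 * exp(-l2 * real n) * norm h"
      using h2 by auto
    also have "\<dots> \<le> max D1 D2 * exp(- min l1 l2 * real n) * norm h"
      by (rule mono) (use e2 in auto)
    finally show "norm (cocycle \<sigma> (\<lambda>\<omega>. Lss \<omega> \<epsilon>) n \<omega> h) \<le> max D1 D2 * exp(- min l1 l2 * real n) * norm h" .
  next
    fix \<epsilon> \<omega> n h assume "\<epsilon> \<in> I" "\<bar>\<epsilon>\<bar> \<le> min e1 e2" "\<omega> \<in> \<Omega>'" "\<psi> h = 0"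
    then have "norm (cocycle \<sigma> (\<lambda>\<omega>. Ls \<omega> \<epsilon>) n \<omega> h) \<le> D1 * exp(-l1 * real n) * norm h"
      using h1 by auto
    also have "\<dots> \<le> max D1 D2 * exp(- min l1 l2 * real n) * norm h"
      by (rule mono) (use e1 in auto)
    finally show "norm (cocycle \<sigma> (\<lambda>\<omega>. Ls \<omega> \<epsilon>) n \<omega> h) \<le> max D1 D2 * exp(- min l1 l2 * real n) * norm h" .
  qed
  show ?thesis
    apply (rule exI[of _ "min e1 e2"], rule conjI) using e1 e2 apply simp
    apply (rule exI[of _ "max D1 D2"], rule conjI) using e1 e2 apply simp
    apply (rule exI[of _ "min l1 l2"], rule conjI) using e1 e2 apply simp
    using B by blast
qed

end
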